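(* The pseudo-independence complex $\Delta(U)$ of every U-matroid $U$ is shellable.
   Context: A U-matroid is a triple $U=(E,\mathcal{D},\rho)$ with $E$ finite, $\mathcal{D}\subseteq2^E$ an accessible distributive lattice of sets, and $\rho:\mathcal{D}\to\mathbb{N}$ with $\rho(\emptyset)=0$, monotone, submodular, with unit increase. Its base polyhedron is $\mathcal{B}(U)=\{\mathbf{x}\in\mathbb{R}^E:\mathbf{x}(A)\le\rho(A)\ \forall A\in\mathcal{D},\ \mathbf{x}(E)=\rho(E)\}$; a basis of $U$ is the support of a vertex of $\mathcal{B}(U)$. The pseudo-independence complex $\Delta(U)$ is the simplicial complex on $E$ generated by the bases of $U$. *)

theory Defs
  imports Complex_Main "HOL-Library.FuncSet"
begin

definition accessible_distributive_lattice :: "'a set \<Rightarrow> 'a set set \<Rightarrow> bool" where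
  "accessible_distributive_lattice E D \<longleftrightarrow>
     D \<subseteq> Pow E \<and> {} \<in> D \<and> E \<in> D \<and>
     (\<forall>A\<in>D. \<forall>B\<in>D. A \<union> B \<in> D \<and> A \<inter> B \<in> D) \<and>
     (\<forall>A\<in>D. A \<noteq> {} \<longrightarrow> (\<exists>e\<in>A. A - {e} \<in> D))"

definition U_matroid :: "'a set \<Rightarrow> 'a set set \<Rightarrow> ('a set \<Rightarrow> nat) \<Rightarrow> bool" where
  "U_matroid E D \<rho> \<longleftrightarrow>
     finite E \<and> accessible_distributive_lattice E D \<and>
     \<rho> {} = 0 \<and>
     (\<forall>A\<in>D. \<forall>B\<in>D. A \<subseteq> B \<longrightarrow> \<rho> A \<le> \<rho> B) \<and>
     (\<forall>A\<in>D. \<forall>B\<in>D. \<rho> (A \<union> B) + \<rho> (A \<inter> B) \<le> \<rho> A + \<rho> B) \<and>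
     (\<forall>A\<in>D. \<forall>e. A \<union> {e} \<in> D \<longrightarrow> \<rho> (A \<union> {e}) \<le> \<rho> A + 1)"

definition base_polyhedron :: "'a set \<Rightarrow> 'a set set \<Rightarrow> ('a set \<Rightarrow> nat) \<Rightarrow> ('a \<Rightarrow> real) set" where
  "base_polyhedron E D \<rho> =
     {x \<in> extensional E. (\<forall>A\<in>D. (\<Sum>e\<in>A. x e) \<le> real (\<rho> A)) \<and> (\<Sum>e\<in>E. x e) = real (\<rho> E)}"

definition is_vertex :: "('a \<Rightarrow> real) set \<Rightarrow> ('a \<Rightarrow> real) \<Rightarrow> bool" where
  "is_vertex P x \<longleftrightarrow> x \<in> P \<and>
     \<not> (\<exists>y\<in>P. \<exists>z\<in>P. y \<noteq> z \<and> (\<exists>t::real. 0 < t \<and> t < 1 \<and> x = (\<lambda>e. t * y e + (1 - t) * z e)))"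

definition support :: "'a set \<Rightarrow> ('a \<Rightarrow> real) \<Rightarrow> 'a set" where
  "support E x = {e \<in> E. x e \<noteq> 0}"

definition U_bases :: "'a set \<Rightarrow> 'a set set \<Rightarrow> ('a set \<Rightarrow> nat) \<Rightarrow> 'a set set" where
  "U_bases E D \<rho> = {support E x | x. is_vertex (base_polyhedron E D \<rho>) x}"

definition generated_complex :: "'a set set \<Rightarrow> 'a set set" where
  "generated_complex Fs = {G. \<exists>F\<in>Fs. G \<subseteq> F}"

definition pseudo_independence_complex :: "'a set \<Rightarrow> 'a set set \<Rightarrow> ('a set \<Rightarrow> nat) \<Rightarrow> 'a set set" where
  "pseudo_independence_complex E D \<rho> = generated_complex (U_bases E D \<rho>)"

definition facets :: "'a set set \<Rightarrow> 'a set set" where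
  "facets K = {F \<in> K. \<forall>G\<in>K. F \<subseteq> G \<longrightarrow> G = F}"

text \<open>A complex is pure of dimension d if all facets have d+1 vertices
  (dimension d is encoded via the facet cardinality d+1 to allow d = -1).\<close>
definition pure_with_card :: "'a set set \<Rightarrow> nat \<Rightarrow> bool" where
  "pure_with_card K k \<longleftrightarrow> (\<forall>F\<in>facets K. card F = k)"

text \<open>Shellability (Bjoerner--Wachs, not necessarily pure): a linear order
  F_1,...,F_t of the facets such that for j \<ge> 2 the complex
  <F_j> \<inter> <F_1,...,F_{j-1}> is pure of dimension dim F_j - 1.\<close>
definition shelling_order :: "'a set set \<Rightarrow> 'a set list \<Rightarrow> bool" where
  "shelling_order K Fs \<longleftrightarrow> distinct Fs \<and> set Fs = facets K \<and>
     (\<forall>j. 0 < j \<and> j < length Fs \<longrightarrow>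
        pure_with_card (generated_complex {Fs ! j} \<inter> generated_complex {Fs ! i | i. i < j})
                       (card (Fs ! j) - 1))"

definition shellable :: "'a set set \<Rightarrow> bool" where
  "shellable K \<longleftrightarrow> (\<exists>Fs. shelling_order K Fs)"

end

theory Submission
  imports Defs "HOL-Library.List_Lexorder"
begin

fun Sq :: "('a set \<Rightarrow> nat) \<Rightarrow> 'a list \<Rightarrow> 'a set" where
  "Sq r [] = {}"
| "Sq r (e # l) = (if r (set (e # l)) \<noteq> r (set l) then insert e (Sq r l) else Sq r l)"

fun vd :: "'a set set \<Rightarrow> 'a list \<Rightarrow> bool" where
  "vd T [] = True"
| "vd T (e # l) = (e \<notin> set l \<and> set (e # l) \<in> T \<and> vd T l)"

fun Spre :: "('a set \<Rightarrow> nat) \<Rightarrow> 'a list \<Rightarrow> 'a set \<Rightarrow> 'a set" where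
  "Spre r [] A = {}"
| "Spre r (e # u) A = (if r (set (e # u) \<union> A) \<noteq> r (set u \<union> A) then insert e (Spre r u A) else Spre r u A)"

lemma Sq_subset: "Sq r l \<subseteq> set l"
  by (induction l) auto

lemma Spre_subset: "Spre r u A \<subseteq> set u"
  by (induction u) auto

lemma Sq_append: "Sq r (u @ l) = Spre r u (set l) \<union> Sq r l"
  by (induction u) (auto simp: Un_assoc)

lemma vd_distinct: "vd T l \<Longrightarrow> distinct l"
  by (induction l) auto

lemma vd_append: "vd T (u @ l) \<Longrightarrow> vd T l"
  by (induction u) auto

lemma vd_mono: "vd T l \<Longrightarrow> T \<subseteq> T' \<Longrightarrow> vd T' l"
  by (induction l) auto

locale UM =
  fixes E :: "'a set" and D :: "'a set set" and \<rho> :: "'a set \<Rightarrow> nat"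
  assumes UM: "U_matroid E D \<rho>"
begin

lemma finE: "finite E" using UM by (simp add: U_matroid_def)
lemma DsubE: "A \<in> D \<Longrightarrow> A \<subseteq> E" using UM by (auto simp: U_matroid_def accessible_distributive_lattice_def)
lemma emptyD: "{} \<in> D" using UM by (auto simp: U_matroid_def accessible_distributive_lattice_def)
lemma ED: "E \<in> D" using UM by (auto simp: U_matroid_def accessible_distributive_lattice_def)
lemma UnD: "A \<in> D \<Longrightarrow> B \<in> D \<Longrightarrow> A \<union> B \<in> D" using UM by (auto simp: U_matroid_def accessible_distributive_lattice_def)
lemma IntD: "A \<in> D \<Longrightarrow> B \<in> D \<Longrightarrow> A \<inter> B \<in> D" using UM by (auto simp: U_matroid_def accessible_distributive_lattice_def)
lemma rho0: "\<rho> {} = 0" using UM by (simp add: U_matroid_def)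
lemma mono: "A \<in> D \<Longrightarrow> B \<in> D \<Longrightarrow> A \<subseteq> B \<Longrightarrow> \<rho> A \<le> \<rho> B" using UM by (simp add: U_matroid_def)
lemma submod: "A \<in> D \<Longrightarrow> B \<in> D \<Longrightarrow> \<rho> (A \<union> B) + \<rho> (A \<inter> B) \<le> \<rho> A + \<rho> B" using UM by (simp add: U_matroid_def)
lemma unit: "A \<in> D \<Longrightarrow> insert e A \<in> D \<Longrightarrow> \<rho> (insert e A) \<le> \<rho> A + 1"
  using UM unfolding U_matroid_def by (metis insert_is_Un sup_commute)
lemma finD: "A \<in> D \<Longrightarrow> finite A" using DsubE finE finite_subset by blast

lemma finiteD: "finite D"
  by (rule finite_subset[of _ "Pow E"]) (auto dest: DsubE simp: finE)

lemma vd_set: "vd D l \<Longrightarrow> set l \<in> D"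
  by (cases l) (auto simp: emptyD)

lemma jump01: "A \<in> D \<Longrightarrow> insert e A \<in> D \<Longrightarrow> \<rho> (insert e A) \<noteq> \<rho> A \<Longrightarrow> \<rho> (insert e A) = \<rho> A + 1"
proof -
  assume a: "A \<in> D" "insert e A \<in> D" "\<rho> (insert e A) \<noteq> \<rho> A"
  have "\<rho> A \<le> \<rho> (insert e A)" using mono[OF a(1,2)] by blast
  then show ?thesis using unit[OF a(1,2)] a(3) by linarith
qed

lemma card_Sq: "vd D l \<Longrightarrow> card (Sq \<rho> l) = \<rho> (set l)"
proof (induction l)
  case Nil then show ?case by (simp add: rho0)
next
  case (Cons e l)
  have d: "set l \<in> D" "insert e (set l) \<in> D" "e \<notin> set l" "vd D l" using Cons.prems vd_set by auto
  have ne: "e \<notin> Sq \<rho> l" using Sq_subset[of \<rho> l] d(3) by blast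
  show ?case
  proof (cases "\<rho> (insert e (set l)) = \<rho> (set l)")
    case True then show ?thesis using Cons.IH d by simp
  next
    case False
    then have "\<rho> (insert e (set l)) = \<rho> (set l) + 1" using jump01 d by blast
    then show ?thesis using Cons.IH d ne False by (simp add: card_insert_if finite_subset[OF Sq_subset])
  qed
qed

lemma card_le: "vd D l \<Longrightarrow> A \<in> D \<Longrightarrow> card (A \<inter> Sq \<rho> l) \<le> \<rho> (A \<inter> set l)"
proof (induction l)
  case Nil then show ?case by (simp add: rho0)
next
  case (Cons e l)
  have d: "set l \<in> D" "insert e (set l) \<in> D" "e \<notin> set l" "vd D l" using Cons.prems vd_set by auto
  have IH: "card (A \<inter> Sq \<rho> l) \<le> \<rho> (A \<inter> set l)" using Cons d by blast
  have fin: "finite (Sq \<rho> l)" by (simp add: finite_subset[OF Sq_subset])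
  have ne: "e \<notin> Sq \<rho> l" using Sq_subset[of \<rho> l] d(3) by blast
  have m: "\<rho> (A \<inter> set l) \<le> \<rho> (A \<inter> insert e (set l))"
    by (rule mono) (use d Cons.prems IntD in auto)
  show ?case
  proof (cases "e \<in> A")
    case False
    then have "A \<inter> Sq \<rho> (e # l) = A \<inter> Sq \<rho> l" by auto
    moreover have "A \<inter> set (e # l) = A \<inter> set l" using False by auto
    ultimately show ?thesis using IH by simp
  next
    case True
    show ?thesis
    proof (cases "\<rho> (insert e (set l)) = \<rho> (set l)")
      case T: True
      then have "A \<inter> Sq \<rho> (e # l) = A \<inter> Sq \<rho> l" by simp
      then show ?thesis using IH m by simp
    next
      case F: False
      then have j: "\<rho> (insert e (set l)) = \<rho> (set l) + 1" using jump01 d by blast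
      have X: "A \<inter> insert e (set l) \<in> D" using IntD Cons.prems d by auto
      have sm: "\<rho> ((A \<inter> insert e (set l)) \<union> set l) + \<rho> ((A \<inter> insert e (set l)) \<inter> set l)
          \<le> \<rho> (A \<inter> insert e (set l)) + \<rho> (set l)" using submod[OF X d(1)] .
      have u: "(A \<inter> insert e (set l)) \<union> set l = insert e (set l)" using True by auto
      have i: "(A \<inter> insert e (set l)) \<inter> set l = A \<inter> set l" by auto
      have "A \<inter> Sq \<rho> (e # l) = insert e (A \<inter> Sq \<rho> l)" using F True by auto
      then have "card (A \<inter> Sq \<rho> (e # l)) = card (A \<inter> Sq \<rho> l) + 1" using ne fin by simp
      then show ?thesis using IH sm u i j by simp
    qed
  qed
qed

lemma suffix_Sq: "vd D (u @ l) \<Longrightarrow> set l \<inter> Sq \<rho> (u @ l) = Sq \<rho> l"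
proof -
  assume a: "vd D (u @ l)"
  have "set u \<inter> set l = {}" using vd_distinct[OF a] by auto
  then show ?thesis using Sq_append[of \<rho> u l] Spre_subset[of \<rho> u "set l"] Sq_subset[of \<rho> l] by blast
qed

definition vec :: "'a set \<Rightarrow> ('a \<Rightarrow> real)" where
  "vec S = (\<lambda>e. if e \<in> E then (if e \<in> S then 1 else 0) else undefined)"

lemma sum_vec: "A \<subseteq> E \<Longrightarrow> sum (vec S) A = real (card (A \<inter> S))"
proof -
  assume A: "A \<subseteq> E"
  have fA: "finite A" using A finE finite_subset by blast
  have "sum (vec S) A = (\<Sum>e\<in>A. of_bool (e \<in> S))"
    by (rule sum.cong) (use A in \<open>auto simp: vec_def\<close>)
  also have "\<dots> = real (card (A \<inter> {e. e \<in> S}))" using fA by simp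
  finally show ?thesis by simp
qed

lemma greedy_vertex:
  assumes v: "vd D z" and sz: "set z = E"
  shows "is_vertex (base_polyhedron E D \<rho>) (vec (Sq \<rho> z))"
proof -
  let ?P = "base_polyhedron E D \<rho>"
  let ?S = "Sq \<rho> z"
  let ?x = "vec ?S"
  have SE: "?S \<subseteq> E" using Sq_subset[of \<rho> z] sz by blast
  have xP: "?x \<in> ?P"
  proof -
    have "?x \<in> extensional E" by (simp add: vec_def extensional_def)
    moreover have "\<forall>A\<in>D. sum ?x A \<le> real (\<rho> A)"
    proof
      fix A assume A: "A \<in> D"
      have "sum ?x A = real (card (A \<inter> ?S))" using sum_vec DsubE A by blast
      also have "\<dots> \<le> real (\<rho> (A \<inter> set z))" using card_le[OF v A] by simp
      also have "A \<inter> set z = A" using DsubE[OF A] sz by blast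
      finally show "sum ?x A \<le> real (\<rho> A)" .
    qed
    moreover have "sum ?x E = real (\<rho> E)"
    proof -
      have "sum ?x E = real (card (E \<inter> ?S))" using sum_vec by blast
      also have "E \<inter> ?S = ?S" using SE by blast
      finally show ?thesis using card_Sq[OF v] sz by simp
    qed
    ultimately show ?thesis by (simp add: base_polyhedron_def)
  qed
  have suf: "sum ?x (set l) = real (\<rho> (set l))" if "z = u @ l" for u l
  proof -
    have "set l \<subseteq> E" using that sz by auto
    then have "sum ?x (set l) = real (card (set l \<inter> ?S))" using sum_vec by blast
    also have "set l \<inter> ?S = Sq \<rho> l" using suffix_Sq v that by blast
    also have "card (Sq \<rho> l) = \<rho> (set l)" using card_Sq vd_append v that by blast
    finally show ?thesis .
  qed
  show ?thesis
    unfolding is_vertex_def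
  proof (intro conjI notI)
    show "?x \<in> ?P" by (rule xP)
  next
    assume "\<exists>y\<in>?P. \<exists>w\<in>?P. y \<noteq> w \<and> (\<exists>t::real. 0 < t \<and> t < 1 \<and> ?x = (\<lambda>e. t * y e + (1 - t) * w e))"
    then obtain y w t where yP: "y \<in> ?P" and wP: "w \<in> ?P" and ne: "y \<noteq> w" and t: "0 < t" "t < 1"
      and xe: "?x = (\<lambda>e. t * y e + (1 - t) * w e)" by blast
    have ybd: "\<forall>A\<in>D. sum y A \<le> real (\<rho> A)" and yext: "y \<in> extensional E"
      using yP by (auto simp: base_polyhedron_def)
    have wbd: "\<forall>A\<in>D. sum w A \<le> real (\<rho> A)" and wext: "w \<in> extensional E"
      using wP by (auto simp: base_polyhedron_def)
    have tight: "sum y (set l) = real (\<rho> (set l)) \<and> sum w (set l) = real (\<rho> (set l))" if "z = u @ l" for u l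
    proof -
      have lD: "set l \<in> D" using vd_set vd_append v that by blast
      have "sum ?x (set l) = t * sum y (set l) + (1 - t) * sum w (set l)"
        by (simp add: xe sum.distrib sum_distrib_left)
      then have eq: "t * sum y (set l) + (1 - t) * sum w (set l) = real (\<rho> (set l))" using suf that by simp
      have b1: "sum y (set l) \<le> real (\<rho> (set l))" using ybd lD by blast
      have b2: "sum w (set l) \<le> real (\<rho> (set l))" using wbd lD by blast
      have "sum y (set l) = real (\<rho> (set l))"
      proof (rule ccontr)
        assume "sum y (set l) \<noteq> real (\<rho> (set l))"
        then have "sum y (set l) < real (\<rho> (set l))" using b1 by simp
        then have "t * sum y (set l) < t * real (\<rho> (set l))" using t by simp
        moreover have "(1 - t) * sum w (set l) \<le> (1 - t) * real (\<rho> (set l))" using t b2 by (simp add: mult_left_mono)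
        ultimately show False using eq by (simp add: algebra_simps)
      qed
      moreover have "sum w (set l) = real (\<rho> (set l))"
      proof (rule ccontr)
        assume "sum w (set l) \<noteq> real (\<rho> (set l))"
        then have "sum w (set l) < real (\<rho> (set l))" using b2 by simp
        then have "(1 - t) * sum w (set l) < (1 - t) * real (\<rho> (set l))" using t by simp
        moreover have "t * sum y (set l) \<le> t * real (\<rho> (set l))" using t b1 by (simp add: mult_left_mono)
        ultimately show False using eq by (simp add: algebra_simps)
      qed
      ultimately show ?thesis by blast
    qed
    have "y = w"
    proof
      fix e
      show "y e = w e"
      proof (cases "e \<in> E")
        case False then show ?thesis using yext wext by (simp add: extensional_def)
      next
        case True
        then obtain u l where zs: "z = u @ e # l" using sz by (metis split_list)
        have el: "e \<notin> set l" using vd_distinct[OF v] zs by auto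
        have "z = (u @ [e]) @ l" using zs by simp
        then have t1: "sum y (set l) = sum w (set l)" using tight by metis
        have t2: "sum y (set (e # l)) = sum w (set (e # l))" using tight zs by metis
        have "sum y (set (e # l)) = y e + sum y (set l)" using el by simp
        moreover have "sum w (set (e # l)) = w e + sum w (set l)" using el by simp
        ultimately show ?thesis using t1 t2 by simp
      qed
    qed
    then show False using ne by simp
  qed
qed

lemma support_vec: "S \<subseteq> E \<Longrightarrow> support E (vec S) = S"
  by (auto simp: support_def vec_def)

lemma vertex_chain:
  assumes xv: "is_vertex (base_polyhedron E D \<rho>) x"
  shows "\<exists>z. vd D z \<and> set z = E \<and> support E x = Sq \<rho> z"
proof -
  let ?P = "base_polyhedron E D \<rho>"
  have xP: "x \<in> ?P" using xv by (simp add: is_vertex_def)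
  have bd: "\<And>A. A \<in> D \<Longrightarrow> sum x A \<le> real (\<rho> A)" and sE: "sum x E = real (\<rho> E)"
    and xext: "x \<in> extensional E" using xP by (auto simp: base_polyhedron_def)
  define T where "T = {A \<in> D. sum x A = real (\<rho> A)}"
  have TD: "T \<subseteq> D" by (auto simp: T_def)
  have emptyT: "{} \<in> T" by (simp add: T_def emptyD rho0)
  have ET: "E \<in> T" by (simp add: T_def ED sE)
  have TUI: "A \<union> B \<in> T \<and> A \<inter> B \<in> T" if A: "A \<in> T" and B: "B \<in> T" for A B
  proof -
    have AD: "A \<in> D" and BD: "B \<in> D" using A B by (auto simp: T_def)
    have su: "sum x (A \<union> B) + sum x (A \<inter> B) = sum x A + sum x B"
      using sum.union_inter[OF finD[OF AD] finD[OF BD]] .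
    have r: "real (\<rho> (A \<union> B)) + real (\<rho> (A \<inter> B)) \<le> real (\<rho> A) + real (\<rho> B)"
      using submod[OF AD BD] by linarith
    have b1: "sum x (A \<union> B) \<le> real (\<rho> (A \<union> B))" using bd UnD[OF AD BD] by blast
    have b2: "sum x (A \<inter> B) \<le> real (\<rho> (A \<inter> B))" using bd IntD[OF AD BD] by blast
    have "sum x A = real (\<rho> A)" "sum x B = real (\<rho> B)" using A B by (auto simp: T_def)
    then have "sum x (A \<union> B) = real (\<rho> (A \<union> B)) \<and> sum x (A \<inter> B) = real (\<rho> (A \<inter> B))"
      using su r b1 b2 by linarith
    then show ?thesis using UnD[OF AD BD] IntD[OF AD BD] by (simp add: T_def)
  qed
  have finT: "finite T" using TD finiteD finite_subset by blast
  have step: "\<exists>e\<in>A. A - {e} \<in> T" if A: "A \<in> T" "A \<noteq> {}" for A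
  proof -
    define C where "C = {B \<in> T. B \<subset> A}"
    have finC: "finite C" using finT by (simp add: C_def)
    have eC: "{} \<in> C" using emptyT A by (auto simp: C_def)
    define m where "m = Max (card ` C)"
    have "m \<in> card ` C" unfolding m_def using finC eC by (intro Max_in) auto
    then obtain A' where A'C: "A' \<in> C" and cA': "card A' = m" by blast
    have maxA': "card B \<le> card A'" if "B \<in> C" for B
      using that finC cA' unfolding m_def by (simp add: Max_ge)
    have A'T: "A' \<in> T" and A'A: "A' \<subset> A" using A'C by (auto simp: C_def)
    have AD: "A \<in> D" using A TD by blast
    have finA: "finite A" using finD[OF AD] .
    show ?thesis
    proof (cases "\<exists>e. A - A' = {e}")
      case True
      then obtain e where e: "A - A' = {e}" by blast
      then have "A - {e} = A'" using A'A by blast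
      then show ?thesis using e A'T by blast
    next
      case False
      obtain a where a: "a \<in> A - A'" using A'A by blast
      have "A - A' - {a} \<noteq> {}" using False a by blast
      then obtain b where b: "b \<in> A - A'" "b \<noteq> a" by blast
      have split: "a \<in> B \<longleftrightarrow> b \<in> B" if BT: "B \<in> T" for B
      proof -
        define M where "M = (B \<inter> A) \<union> A'"
        have MT: "M \<in> T" unfolding M_def using TUI BT A(1) A'T by blast
        have sub: "A' \<subseteq> M" "M \<subseteq> A" using A'A by (auto simp: M_def)
        show ?thesis
        proof (cases "M = A")
          case True
          then have "a \<in> M" "b \<in> M" using a b by auto
          then have "a \<in> B" "b \<in> B" using a b by (auto simp: M_def)
          then show ?thesis by simp
        next
          case False
          then have "M \<in> C" using MT sub by (auto simp: C_def)
          then have "card M \<le> card A'" using maxA' by blast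
          moreover have "finite M" using sub finA finite_subset by blast
          moreover have "card A' \<le> card M" using card_mono[OF \<open>finite M\<close> sub(1)] .
          ultimately have "M = A'" using sub(1) card_subset_eq[OF \<open>finite M\<close> sub(1)] by simp
          then have "a \<notin> B" "b \<notin> B" using a b by (auto simp: M_def)
          then show ?thesis by simp
        qed
      qed
      have aE: "a \<in> E" and bE: "b \<in> E" using a b DsubE[OF AD] by auto
      define d :: "'a \<Rightarrow> real" where "d = (\<lambda>e. (if e = a then 1 else 0) - (if e = b then 1 else 0))"
      have sd: "sum d B = (if a \<in> B then 1 else 0) - (if b \<in> B then 1 else 0)" if "finite B" for B
        using that by (simp add: d_def sum_subtractf sum.delta)
      have sdT: "sum d B = 0" if "B \<in> T" for B
        using sd[OF finD] split[OF that] that TD by auto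
      have sdb: "sum d B \<le> 1" "- 1 \<le> sum d B" if "finite B" for B
        using sd[OF that] by auto
      define Sl where "Sl = (\<lambda>B. real (\<rho> B) - sum x B) ` (D - T)"
      have finSl: "finite Sl" unfolding Sl_def using finiteD by simp
      define \<epsilon> where "\<epsilon> = Min (insert 1 Sl)"
      have epos: "\<epsilon> > 0"
        unfolding \<epsilon>_def using finSl
      proof (subst Min_gr_iff)
        show "\<forall>s\<in>insert 1 Sl. 0 < s"
        proof
          fix s assume "s \<in> insert 1 Sl"
          then show "0 < s"
          proof
            assume "s = 1" then show ?thesis by simp
          next
            assume "s \<in> Sl"
            then obtain B where B: "B \<in> D" "B \<notin> T" and sB: "s = real (\<rho> B) - sum x B" by (auto simp: Sl_def)
            have "sum x B \<noteq> real (\<rho> B)" using B by (auto simp: T_def)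
            then show ?thesis using bd[OF B(1)] sB by linarith
          qed
        qed
      qed auto
      have ele: "\<epsilon> \<le> real (\<rho> B) - sum x B" if "B \<in> D" "B \<notin> T" for B
      proof -
        have "real (\<rho> B) - sum x B \<in> insert 1 Sl" using that by (auto simp: Sl_def)
        then show ?thesis unfolding \<epsilon>_def using finSl by (simp add: Min_le)
      qed
      define y where "y = (\<lambda>e. if e \<in> E then x e + \<epsilon> * d e else undefined)"
      define w where "w = (\<lambda>e. if e \<in> E then x e - \<epsilon> * d e else undefined)"
      have sy: "sum y B = sum x B + \<epsilon> * sum d B" if "B \<subseteq> E" for B
      proof -
        have "sum y B = sum (\<lambda>e. x e + \<epsilon> * d e) B" by (rule sum.cong) (use that in \<open>auto simp: y_def\<close>)
        then show ?thesis by (simp add: sum.distrib sum_distrib_left)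
      qed
      have sw: "sum w B = sum x B - \<epsilon> * sum d B" if "B \<subseteq> E" for B
      proof -
        have "sum w B = sum (\<lambda>e. x e - \<epsilon> * d e) B" by (rule sum.cong) (use that in \<open>auto simp: w_def\<close>)
        then show ?thesis by (simp add: sum_subtractf sum_distrib_left)
      qed
      have yP: "y \<in> ?P"
      proof -
        have "y \<in> extensional E" by (simp add: y_def extensional_def)
        moreover have "\<forall>B\<in>D. sum y B \<le> real (\<rho> B)"
        proof
          fix B assume BD: "B \<in> D"
          show "sum y B \<le> real (\<rho> B)"
          proof (cases "B \<in> T")
            case True then show ?thesis using sy[OF DsubE[OF BD]] sdT bd[OF BD] by simp
          next
            case False
            have "\<epsilon> * sum d B \<le> \<epsilon> * 1" using sdb(1)[OF finD[OF BD]] epos by (simp add: mult_left_mono)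
            then show ?thesis using sy[OF DsubE[OF BD]] ele[OF BD False] by linarith
          qed
        qed
        moreover have "sum y E = real (\<rho> E)" using sy[of E] sdT[OF ET] sE by simp
        ultimately show ?thesis by (simp add: base_polyhedron_def)
      qed
      have wP: "w \<in> ?P"
      proof -
        have "w \<in> extensional E" by (simp add: w_def extensional_def)
        moreover have "\<forall>B\<in>D. sum w B \<le> real (\<rho> B)"
        proof
          fix B assume BD: "B \<in> D"
          show "sum w B \<le> real (\<rho> B)"
          proof (cases "B \<in> T")
            case True then show ?thesis using sw[OF DsubE[OF BD]] sdT bd[OF BD] by simp
          next
            case False
            have "\<epsilon> * (- 1) \<le> \<epsilon> * sum d B" using sdb(2)[OF finD[OF BD]] epos by (intro mult_left_mono) auto
            then show ?thesis using sw[OF DsubE[OF BD]] ele[OF BD False] by linarith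
          qed
        qed
        moreover have "sum w E = real (\<rho> E)" using sw[of E] sdT[OF ET] sE by simp
        ultimately show ?thesis by (simp add: base_polyhedron_def)
      qed
      have "y a \<noteq> w a" using aE b(2) epos by (simp add: y_def w_def d_def)
      then have ne: "y \<noteq> w" by metis
      have xe: "x = (\<lambda>e. (1/2) * y e + (1 - 1/2) * w e)"
      proof
        fix e show "x e = (1/2) * y e + (1 - 1/2) * w e"
        proof (cases "e \<in> E")
          case True then show ?thesis by (simp add: y_def w_def algebra_simps)
        next
          case False
          then have "x e = undefined" using xext by (simp add: extensional_def)
          then show ?thesis using False by (simp add: y_def w_def)
        qed
      qed
      have "\<exists>y\<in>?P. \<exists>w\<in>?P. y \<noteq> w \<and> (\<exists>t::real. 0 < t \<and> t < 1 \<and> x = (\<lambda>e. t * y e + (1 - t) * w e))"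
        using yP wP ne xe by (intro bexI[of _ y] bexI[of _ w] conjI exI[of _ "1/2"]) auto
      then show ?thesis using xv by (simp add: is_vertex_def)
    qed
  qed
  have chain: "\<exists>z. vd T z \<and> set z = A" if "A \<in> T" for A
    using that
  proof (induction "card A" arbitrary: A rule: less_induct)
    case less
    show ?case
    proof (cases "A = {}")
      case True then show ?thesis by (intro exI[of _ "[]"]) simp
    next
      case False
      then obtain e where e: "e \<in> A" "A - {e} \<in> T" using step less.prems by blast
      have finA: "finite A" using less.prems TD finD by blast
      have "card (A - {e}) < card A" by (rule card_Diff1_less[OF finA e(1)])
      then obtain z0 where z0: "vd T z0" "set z0 = A - {e}" using less.hyps[OF _ e(2)] by blast
      have sA: "set (e # z0) = A" using z0 e(1) by auto
      have "e \<notin> set z0" using z0 by simp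
      then have "vd T (e # z0)" using z0(1) sA less.prems by simp
      then show ?thesis using sA by blast
    qed
  qed
  obtain z where z: "vd T z" "set z = E" using chain ET by blast
  have vT_set: "set l \<in> T" if "vd T l" for l using that emptyT by (cases l) auto
  have supp: "{e \<in> set l. x e \<noteq> 0} = Sq \<rho> l" if "vd T l" for l
    using that
  proof (induction l)
    case Nil then show ?case by simp
  next
    case (Cons e l)
    have d: "set l \<in> T" "insert e (set l) \<in> T" "e \<notin> set l" "vd T l" using Cons.prems vT_set by auto
    have "sum x (insert e (set l)) = x e + sum x (set l)" using d(3) by simp
    then have xe: "x e = real (\<rho> (insert e (set l))) - real (\<rho> (set l))" using d(1,2) by (simp add: T_def)
    have j: "\<rho> (insert e (set l)) \<noteq> \<rho> (set l) \<Longrightarrow> \<rho> (insert e (set l)) = \<rho> (set l) + 1"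
      using jump01 d TD by blast
    show ?case
    proof (cases "\<rho> (insert e (set l)) = \<rho> (set l)")
      case True
      then have "x e = 0" using xe by simp
      moreover have "Sq \<rho> (e # l) = Sq \<rho> l" using True by simp
      ultimately show ?thesis using Cons.IH[OF d(4)] by auto
    next
      case False
      then have "x e = 1" using xe j by simp
      moreover have "Sq \<rho> (e # l) = insert e (Sq \<rho> l)" using False by simp
      ultimately show ?thesis using Cons.IH[OF d(4)] by auto
    qed
  qed
  have "support E x = Sq \<rho> z" using supp[OF z(1)] z(2) by (simp add: support_def)
  then show ?thesis using z vd_mono[OF z(1) TD] by blast
qed

lemma bases_eq: "U_bases E D \<rho> = {Sq \<rho> z | z. vd D z \<and> set z = E}"
proof
  show "U_bases E D \<rho> \<subseteq> {Sq \<rho> z | z. vd D z \<and> set z = E}"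
    using vertex_chain by (auto simp: U_bases_def)
next
  show "{Sq \<rho> z | z. vd D z \<and> set z = E} \<subseteq> U_bases E D \<rho>"
  proof
    fix B assume "B \<in> {Sq \<rho> z | z. vd D z \<and> set z = E}"
    then obtain z where z: "vd D z" "set z = E" "B = Sq \<rho> z" by blast
    have "B \<subseteq> E" using Sq_subset[of \<rho> z] z by simp
    then have "support E (vec B) = B" by (rule support_vec)
    moreover have "is_vertex (base_polyhedron E D \<rho>) (vec B)" using greedy_vertex[OF z(1,2)] z(3) by simp
    ultimately show "B \<in> U_bases E D \<rho>" unfolding U_bases_def by blast
  qed
qed

end

lemma vd_append_swap: "vd T (u @ l) \<Longrightarrow> vd T l' \<Longrightarrow> set l' = set l \<Longrightarrow> vd T (u @ l')"
  by (induction u) auto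

context UM
begin

lemma vd_remove: "vd D L \<Longrightarrow> set L - {y} \<in> D \<Longrightarrow> vd D (remove1 y L)"
proof (induction L)
  case Nil then show ?case by simp
next
  case (Cons e L0)
  show ?case
  proof (cases "e = y")
    case True then show ?thesis using Cons.prems by simp
  next
    case False
    have L0D: "set L0 \<in> D" using Cons.prems vd_set by simp
    have "set L0 - {y} = set L0 \<inter> (set (e # L0) - {y})" using Cons.prems by auto
    then have s0: "set L0 - {y} \<in> D" using IntD[OF L0D Cons.prems(2)] by simp
    have v0: "vd D (remove1 y L0)" using Cons.IH s0 Cons.prems by simp
    have dL0: "distinct L0" using Cons.prems(1) vd_distinct[of D L0] by simp
    have sr: "set (remove1 y L0) = set L0 - {y}" using dL0 by simp
    have "set (e # remove1 y L0) = set (e # L0) - {y}" using sr False by auto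
    then show ?thesis using False v0 Cons.prems sr by simp
  qed
qed

lemma Sq_remove: "vd D L \<Longrightarrow> y \<in> set L \<Longrightarrow> set L - {y} \<in> D \<Longrightarrow> Sq \<rho> L - {y} \<subseteq> Sq \<rho> (remove1 y L)"
proof (induction L)
  case Nil then show ?case by simp
next
  case (Cons e L0)
  show ?case
  proof (cases "e = y")
    case True then show ?thesis by auto
  next
    case False
    have L0D: "set L0 \<in> D" using Cons.prems vd_set by simp
    have LD: "insert e (set L0) \<in> D" using Cons.prems by simp
    have yL0: "y \<in> set L0" using Cons.prems False by simp
    have eL0: "e \<notin> set L0" using Cons.prems by simp
    have "set L0 - {y} = set L0 \<inter> (set (e # L0) - {y})" using Cons.prems by auto
    then have s0: "set L0 - {y} \<in> D" using IntD[OF L0D Cons.prems(3)] by simp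
    have IH: "Sq \<rho> L0 - {y} \<subseteq> Sq \<rho> (remove1 y L0)" using Cons.IH s0 Cons.prems yL0 by simp
    have dL0: "distinct L0" using Cons.prems(1) vd_distinct[of D L0] by simp
    have sr: "set (remove1 y L0) = set L0 - {y}" using dL0 by simp
    have rem: "remove1 y (e # L0) = e # remove1 y L0" using False by simp
    have X: "set (e # L0) - {y} = insert e (set L0 - {y})" using False by auto
    show ?thesis
    proof (cases "\<rho> (insert e (set L0)) = \<rho> (set L0)")
      case True
      then have "Sq \<rho> (e # L0) = Sq \<rho> L0" by simp
      moreover have "Sq \<rho> (remove1 y L0) \<subseteq> Sq \<rho> (remove1 y (e # L0))" using rem by auto
      ultimately show ?thesis using IH by blast
    next
      case F: False
      have j: "\<rho> (insert e (set L0)) = \<rho> (set L0) + 1" using jump01[OF L0D LD F] .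
      have XD: "insert e (set L0 - {y}) \<in> D" using Cons.prems(3) X by simp
      have sm: "\<rho> (insert e (set L0 - {y}) \<union> set L0) + \<rho> (insert e (set L0 - {y}) \<inter> set L0)
           \<le> \<rho> (insert e (set L0 - {y})) + \<rho> (set L0)" using submod[OF XD L0D] .
      have u: "insert e (set L0 - {y}) \<union> set L0 = insert e (set L0)" using yL0 by auto
      have i: "insert e (set L0 - {y}) \<inter> set L0 = set L0 - {y}" using eL0 by auto
      have "\<rho> (insert e (set L0 - {y})) \<noteq> \<rho> (set L0 - {y})" using sm u i j by simp
      then have "Sq \<rho> (e # remove1 y L0) = insert e (Sq \<rho> (remove1 y L0))" using sr by simp
      moreover have "Sq \<rho> (e # L0) = insert e (Sq \<rho> L0)" using F by simp
      ultimately show ?thesis using IH rem by auto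
    qed
  qed
qed

end

locale UMI = UM +
  fixes idx :: "'a \<Rightarrow> nat"
  assumes inj: "inj_on idx E"
begin

definition Z where "Z = {z. vd D z \<and> set z = E}"

definition key :: "'a set \<Rightarrow> nat list" where
  "key B = Min {map idx z | z. z \<in> Z \<and> Sq \<rho> z = B}"

lemma finZ: "finite Z"
proof -
  have "Z \<subseteq> {xs. set xs \<subseteq> E \<and> length xs \<le> card E}"
    using vd_distinct distinct_card by (fastforce simp: Z_def)
  then show ?thesis using finite_lists_length_le[OF finE] finite_subset by blast
qed

lemma bases_Z: "U_bases E D \<rho> = Sq \<rho> ` Z"
  using bases_eq by (auto simp: Z_def)

lemma key_in: "B \<in> Sq \<rho> ` Z \<Longrightarrow> \<exists>z\<in>Z. Sq \<rho> z = B \<and> map idx z = key B"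
proof -
  assume B: "B \<in> Sq \<rho> ` Z"
  let ?M = "{map idx z | z. z \<in> Z \<and> Sq \<rho> z = B}"
  have "finite ?M" using finZ by simp
  moreover have "?M \<noteq> {}" using B by auto
  ultimately have "Min ?M \<in> ?M" by (rule Min_in)
  then show ?thesis unfolding key_def by auto
qed

lemma key_le: "z \<in> Z \<Longrightarrow> key (Sq \<rho> z) \<le> map idx z"
proof -
  assume z: "z \<in> Z"
  let ?M = "{map idx z' | z'. z' \<in> Z \<and> Sq \<rho> z' = Sq \<rho> z}"
  have "finite ?M" using finZ by simp
  moreover have "map idx z \<in> ?M" using z by auto
  ultimately show ?thesis unfolding key_def by (rule Min_le)
qed

lemma key_inj: "B1 \<in> Sq \<rho> ` Z \<Longrightarrow> B2 \<in> Sq \<rho> ` Z \<Longrightarrow> key B1 = key B2 \<Longrightarrow> B1 = B2"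
proof -
  assume B: "B1 \<in> Sq \<rho> ` Z" "B2 \<in> Sq \<rho> ` Z" "key B1 = key B2"
  obtain z1 where z1: "z1 \<in> Z" "Sq \<rho> z1 = B1" "map idx z1 = key B1" using key_in B(1) by blast
  obtain z2 where z2: "z2 \<in> Z" "Sq \<rho> z2 = B2" "map idx z2 = key B2" using key_in B(2) by blast
  have "inj_on idx (set z1 \<union> set z2)" using inj z1(1) z2(1) by (simp add: Z_def)
  then have "z1 = z2" using z1(3) z2(3) B(3) inj_on_map_eq_map by metis
  then show ?thesis using z1 z2 by simp
qed

lemma card_base: "z \<in> Z \<Longrightarrow> card (Sq \<rho> z) = \<rho> E"
  using card_Sq by (auto simp: Z_def)

lemma fin_base: "finite (Sq \<rho> z)"
  using Sq_subset finite_set finite_subset by metis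

lemma exchange:
  assumes B: "B \<in> Sq \<rho> ` Z" and B': "B' \<in> Sq \<rho> ` Z" and lt: "key B < key B'"
  shows "\<exists>B''\<in>Sq \<rho> ` Z. key B'' < key B' \<and> (\<exists>y\<in>B'. y \<notin> B \<and> B'' \<inter> B' = B' - {y})"
proof -
  obtain zB where zB: "zB \<in> Z" "Sq \<rho> zB = B" "map idx zB = key B" using key_in B by blast
  obtain z' where z': "z' \<in> Z" "Sq \<rho> z' = B'" "map idx z' = key B'" using key_in B' by blast
  have vB: "vd D zB" "set zB = E" and v': "vd D z'" "set z' = E" using zB(1) z'(1) by (auto simp: Z_def)
  have lenB: "length zB = card E" using vd_distinct[OF vB(1)] vB(2) distinct_card by metis
  have len': "length z' = card E" using vd_distinct[OF v'(1)] v'(2) distinct_card by metis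
  have "(map idx zB, map idx z') \<in> lexord {(u, v). u < v}"
    using lt zB(3) z'(3) by (simp add: list_less_def)
  then obtain a v0 where "map idx z' = map idx zB @ a # v0 \<or>
      (\<exists>u a b v w. (a, b) \<in> {(u, v). u < v} \<and> map idx zB = u @ a # v \<and> map idx z' = u @ b # w)"
    unfolding lexord_def by blast
  moreover have "map idx z' \<noteq> map idx zB @ a # v0"
  proof
    assume "map idx z' = map idx zB @ a # v0"
    then have "length (map idx z') = length (map idx zB) + Suc (length v0)" by simp
    then show False using lenB len' by simp
  qed
  ultimately obtain u a b v w where ab: "a < b" and mB: "map idx zB = u @ a # v" and m': "map idx z' = u @ b # w"
    by blast
  from mB obtain U1 r1 where zB1: "zB = U1 @ r1" "u = map idx U1" "a # v = map idx r1"
    by (auto simp: map_eq_append_conv)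
  from zB1(3) obtain y V1 where r1: "r1 = y # V1" "a = idx y" by (metis map_eq_Cons_conv)
  from m' obtain U2 r2 where z'1: "z' = U2 @ r2" "u = map idx U2" "b # w = map idx r2"
    by (auto simp: map_eq_append_conv)
  from z'1(3) obtain x W where r2: "r2 = x # W" "b = idx x" by (metis map_eq_Cons_conv)
  have "inj_on idx (set U1 \<union> set U2)" using inj vB(2) v'(2) zB1(1) z'1(1) by (auto intro: inj_on_subset)
  then have U12: "U1 = U2" using zB1(2) z'1(2) inj_on_map_eq_map by metis
  define U where "U = U1"
  define L where "L = x # W"
  have zBd: "zB = U @ y # V1" using zB1 r1 U_def by simp
  have z'd: "z' = U @ L" using z'1 r2 U12 U_def L_def by simp
  have dB: "distinct zB" using vd_distinct vB(1) by blast
  have d': "distinct z'" using vd_distinct v'(1) by blast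
  have sL: "set L = E - set U" using d' v'(2) z'd by auto
  have syV: "set (y # V1) = E - set U" using dB vB(2) zBd by auto
  have yL: "y \<in> set L" using sL syV by auto
  have yU: "y \<notin> set U" using syV by auto
  have yV: "y \<notin> set V1" using dB zBd by simp
  have sLy: "set L - {y} = set V1" using sL syV yV by auto
  have vyV: "vd D (y # V1)" using vd_append vB(1) zBd by metis
  have V1D: "set V1 \<in> D" using vd_set vyV by simp
  have vL: "vd D L" using vd_append v'(1) z'd by metis
  have LD: "set L \<in> D" using vd_set vL by simp
  have dL: "distinct L" using vd_distinct vL by blast
  define R where "R = remove1 y L"
  have sR: "set R = set L - {y}" using dL by (simp add: R_def)
  have vR: "vd D R" unfolding R_def using vd_remove[OF vL] sLy V1D by simp
  have yR: "y \<notin> set R" using sR by simp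
  have syR: "set (y # R) = set L" using sR yL by auto
  have vyR: "vd D (y # R)" using vR yR syR LD by simp
  define z'' where "z'' = U @ y # R"
  have v'': "vd D z''" unfolding z''_def using vd_append_swap[of D U L "y # R"] v'(1) z'd vyR syR by simp
  have s'': "set z'' = E" using syR z'd v'(2) by (auto simp: z''_def)
  have Z'': "z'' \<in> Z" using v'' s'' by (simp add: Z_def)
  have ml: "map idx z'' < map idx z'"
  proof -
    have "map idx z'' = u @ a # map idx R" using zB1(2) r1(2) U_def by (simp add: z''_def)
    moreover have "map idx z' = u @ b # w" using m' .
    ultimately have "(map idx z'', map idx z') \<in> lexord {(u, v). u < v}"
      unfolding lexord_def using ab by blast
    then show ?thesis by (simp add: list_less_def)
  qed
  define B'' where "B'' = Sq \<rho> z''"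
  have kB'': "key B'' < key B'" using key_le[OF Z''] ml z'(3) unfolding B''_def by simp
  have B''Z: "B'' \<in> Sq \<rho> ` Z" using Z'' B''_def by blast
  have eB': "B' = Spre \<rho> U (set L) \<union> Sq \<rho> L" using z'(2) z'd Sq_append by metis
  have eB'': "B'' = Spre \<rho> U (set L) \<union> Sq \<rho> (y # R)" unfolding B''_def z''_def
    using Sq_append[of \<rho> U "y # R"] syR by simp
  have "Sq \<rho> L - {y} \<subseteq> Sq \<rho> R" unfolding R_def using Sq_remove[OF vL yL] sLy V1D by simp
  moreover have "Sq \<rho> R \<subseteq> Sq \<rho> (y # R)" by auto
  ultimately have sub: "B' - {y} \<subseteq> B''" using eB' eB'' by blast
  have yB: "y \<in> B \<Longrightarrow> y \<in> B''"
  proof -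
    assume "y \<in> B"
    moreover have "B = Spre \<rho> U (set (y # V1)) \<union> Sq \<rho> (y # V1)" using zB(2) zBd Sq_append by metis
    moreover have "y \<notin> Spre \<rho> U (set (y # V1))" using Spre_subset[of \<rho> U "set (y # V1)"] yU by blast
    ultimately have "y \<in> Sq \<rho> (y # V1)" by blast
    then have "\<rho> (set (y # V1)) \<noteq> \<rho> (set V1)" using Sq_subset[of \<rho> V1] yV by (auto split: if_splits)
    then have "\<rho> (set (y # R)) \<noteq> \<rho> (set R)" using syR syV sL sR sLy by simp
    then have "y \<in> Sq \<rho> (y # R)" by simp
    then show "y \<in> B''" using eB'' by blast
  qed
  have cB': "card B' = \<rho> E" using card_base z' by blast
  have cB'': "card B'' = \<rho> E" using card_base Z'' B''_def by blast
  have fB'': "finite B''" using fin_base B''_def by simp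
  have fB': "finite B'" using fin_base z'(2) by blast
  have neq: "B'' \<noteq> B'" using kB'' by auto
  have notsup: "\<not> B' \<subseteq> B''"
  proof
    assume "B' \<subseteq> B''"
    then have "B' = B''" using card_subset_eq[OF fB''] cB' cB'' by metis
    then show False using neq by simp
  qed
  have yB'': "y \<notin> B''" using sub notsup by blast
  have ynB: "y \<notin> B" using yB yB'' by blast
  have yB': "y \<in> B'" using sub notsup by blast
  have "B'' \<inter> B' = B' - {y}" using sub yB'' by blast
  then show ?thesis using B''Z kB'' yB' ynB by blast
qed

end

theorem theorem5p1:
  fixes E :: "'a set" and D :: "'a set set" and \<rho> :: "'a set \<Rightarrow> nat"
  assumes "U_matroid E D \<rho>"
  shows "shellable (pseudo_independence_complex E D \<rho>)"
proof -
  interpret UM E D \<rho> using assms by (simp add: UM_def)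
  obtain idx :: "'a \<Rightarrow> nat" and n where "idx ` E = {i. i < n}" and inj: "inj_on idx E"
    using finite_imp_inj_to_nat_seg[OF finE] by blast
  interpret UMI E D \<rho> idx using assms inj by (simp add: UMI_def UM_def UMI_axioms_def)
  let ?BS = "Sq \<rho> ` Z"
  have finBS: "finite ?BS" using finZ by simp
  obtain bl where bl: "distinct bl" "set bl = ?BS" using finite_distinct_list[OF finBS] by blast
  define Fs where "Fs = sort_key key bl"
  have dF: "distinct Fs" using bl by (simp add: Fs_def)
  have sF: "set Fs = ?BS" using bl by (simp add: Fs_def)
  have sortF: "sorted (map key Fs)" by (simp add: Fs_def)
  have injk: "inj_on key ?BS" using key_inj by (meson inj_onI)
  have dmap: "distinct (map key Fs)" using dF injk sF by (simp add: distinct_map)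
  have strict: "sorted_wrt (<) (map key Fs)" using sortF dmap by (simp add: strict_sorted_iff)
  have lt: "key (Fs ! i) < key (Fs ! j)" if "i < j" "j < length Fs" for i j
    using strict that by (auto simp: sorted_wrt_iff_nth_less)
  have bk: "k < j" if "k < length Fs" "j < length Fs" "key (Fs ! k) < key (Fs ! j)" for k j
  proof (rule ccontr)
    assume "\<not> k < j"
    then have "j < k \<or> j = k" by auto
    then show False
    proof
      assume "j < k" then have "key (Fs ! j) < key (Fs ! k)" using lt that by blast
      then show False using that(3) by simp
    next
      assume "j = k" then show False using that(3) by simp
    qed
  qed
  have cardB: "card B = \<rho> E" if "B \<in> ?BS" for B using that card_base by blast
  have finB: "finite B" if "B \<in> ?BS" for B using that fin_base by blast
  define K where "K = pseudo_independence_complex E D \<rho>"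
  have K: "K = generated_complex ?BS" unfolding K_def pseudo_independence_complex_def using bases_Z by simp
  have facK: "facets K = ?BS"
  proof
    show "facets K \<subseteq> ?BS"
    proof
      fix F assume F: "F \<in> facets K"
      then have "F \<in> K" by (simp add: facets_def)
      then obtain B where B: "B \<in> ?BS" "F \<subseteq> B" using K by (auto simp: generated_complex_def)
      have "B \<in> K" using K B(1) by (auto simp: generated_complex_def)
      then have "B = F" using F B(2) by (simp add: facets_def)
      then show "F \<in> ?BS" using B by simp
    qed
  next
    show "?BS \<subseteq> facets K"
    proof
      fix B assume B: "B \<in> ?BS"
      have "B \<in> K" using K B by (auto simp: generated_complex_def)
      moreover have "G = B" if "G \<in> K" "B \<subseteq> G" for G
      proof -
        have "G \<in> generated_complex ?BS" using that(1) K by simp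
        then obtain B2 where B2: "B2 \<in> ?BS" "G \<subseteq> B2" unfolding generated_complex_def by blast
        have "B \<subseteq> B2" using that(2) B2(2) by blast
        then have "B = B2" using card_subset_eq[OF finB[OF B2(1)]] cardB[OF B] cardB[OF B2(1)] by metis
        then show ?thesis using that(2) B2(2) by blast
      qed
      ultimately show "B \<in> facets K" by (auto simp: facets_def)
    qed
  qed
  have shell: "pure_with_card (generated_complex {Fs ! j} \<inter> generated_complex {Fs ! i | i. i < j})
                       (card (Fs ! j) - 1)" if j: "0 < j" "j < length Fs" for j
    unfolding pure_with_card_def
  proof
    let ?C = "generated_complex {Fs ! j} \<inter> generated_complex {Fs ! i | i. i < j}"
    fix F assume F: "F \<in> facets ?C"
    then have FC: "F \<in> ?C" and Fmax: "\<And>G. G \<in> ?C \<Longrightarrow> F \<subseteq> G \<Longrightarrow> G = F" by (auto simp: facets_def)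
    have FB': "F \<subseteq> Fs ! j" using FC by (auto simp: generated_complex_def)
    obtain i where i: "i < j" "F \<subseteq> Fs ! i" using FC by (auto simp: generated_complex_def)
    have B'in: "Fs ! j \<in> ?BS" using sF j(2) nth_mem by blast
    have Bin: "Fs ! i \<in> ?BS" using sF j(2) i(1) nth_mem by (metis order.strict_trans)
    have "key (Fs ! i) < key (Fs ! j)" using lt i(1) j(2) by blast
    then obtain B'' y where B'': "B'' \<in> ?BS" "key B'' < key (Fs ! j)" and y: "y \<in> Fs ! j" "y \<notin> Fs ! i"
      and int: "B'' \<inter> Fs ! j = Fs ! j - {y}"
      using exchange[OF Bin B'in] by blast
    obtain k where k: "k < length Fs" "Fs ! k = B''" using B''(1) sF by (metis in_set_conv_nth)
    have kj: "k < j" using bk[OF k(1) j(2)] B''(2) k(2) by simp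
    let ?G = "Fs ! j - {y}"
    have "?G \<in> generated_complex {Fs ! j}" by (auto simp: generated_complex_def)
    moreover have "?G \<in> generated_complex {Fs ! i | i. i < j}"
      using kj k(2) int unfolding generated_complex_def by blast
    ultimately have GC: "?G \<in> ?C" by blast
    have "F \<subseteq> ?G" using FB' i(2) y(2) by blast
    then have "?G = F" using Fmax GC by blast
    moreover have "card ?G = card (Fs ! j) - 1" using y(1) finB[OF B'in] by simp
    ultimately show "card F = card (Fs ! j) - 1" by simp
  qed
  have "shelling_order K Fs"
    unfolding shelling_order_def using dF sF facK shell by simp
  then show ?thesis unfolding K_def shellable_def by blast
qed

end
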